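(* Let $\phi\in\mathbb{Z}[X]$ have degree at least one, let $x\neq0$ be any root of $\phi$, let $f\in\mathbb{Z}[X^{\pm}]$ and let $a,b\in\mathbb{N}$ with $a\neq b$. If $\phi^2$ divides $X^a-X^bf$, then $a-b=\frac{xf'(x)}{f(x)}$.
   Context: $\mathbb{Z}[X^{\pm}]$ is the ring of integer Laurent polynomials; $f'$ denotes the formal derivative of $f$. *)

theory Defs
  imports "HOL-Analysis.Analysis" "HOL-Computational_Algebra.Computational_Algebra"
begin

text \<open>Integer Laurent polynomials Z[X^{+-}] are represented as formal Laurent series over int
  with finitely many nonzero coefficients.\<close>

definition is_lpoly :: "int fls \<Rightarrow> bool" where
  "is_lpoly f \<longleftrightarrow> finite {n. fls_nth f n \<noteq> 0}"

definition poly_to_lpoly :: "int poly \<Rightarrow> int fls" where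
  "poly_to_lpoly p = fps_to_fls (fps_of_poly p)"

definition lpoly_eval :: "int fls \<Rightarrow> complex \<Rightarrow> complex" where
  "lpoly_eval f x = (\<Sum>n\<in>{n. fls_nth f n \<noteq> 0}. of_int (fls_nth f n) * x powi n)"

definition lpoly_dvd :: "int fls \<Rightarrow> int fls \<Rightarrow> bool" where
  "lpoly_dvd g h \<longleftrightarrow> (\<exists>q. is_lpoly q \<and> h = g * q)"

end

theory Submission
  imports Defs
begin

definition supp :: "int fls \<Rightarrow> int set" where "supp f = {n. fls_nth f n \<noteq> 0}"

lemma eval_superset:
  assumes "finite A" "supp f \<subseteq> A"
  shows "lpoly_eval f x = (\<Sum>n\<in>A. of_int (fls_nth f n) * x powi n)"
  unfolding lpoly_eval_def
  by (rule sum.mono_neutral_left) (use assms in \<open>auto simp: supp_def\<close>)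

lemma is_lpoly_supp: "is_lpoly f \<longleftrightarrow> finite (supp f)"
  by (simp add: is_lpoly_def supp_def)

lemma is_lpoly_add: "is_lpoly f \<Longrightarrow> is_lpoly g \<Longrightarrow> is_lpoly (f + g)"
  unfolding is_lpoly_def by (rule finite_subset[of _ "{n. fls_nth f n \<noteq> 0} \<union> {n. fls_nth g n \<noteq> 0}"]) auto

lemma is_lpoly_diff: "is_lpoly f \<Longrightarrow> is_lpoly g \<Longrightarrow> is_lpoly (f - g)"
  unfolding is_lpoly_def by (rule finite_subset[of _ "{n. fls_nth f n \<noteq> 0} \<union> {n. fls_nth g n \<noteq> 0}"]) auto

lemma eval_add: assumes "is_lpoly f" "is_lpoly g"
  shows "lpoly_eval (f + g) x = lpoly_eval f x + lpoly_eval g x"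
proof -
  let ?A = "supp f \<union> supp g"
  have fin: "finite ?A" using assms by (simp add: is_lpoly_supp)
  have "lpoly_eval (f + g) x = (\<Sum>n\<in>?A. of_int (fls_nth (f+g) n) * x powi n)"
    by (rule eval_superset[OF fin]) (auto simp: supp_def)
  also have "\<dots> = (\<Sum>n\<in>?A. of_int (fls_nth f n) * x powi n) + (\<Sum>n\<in>?A. of_int (fls_nth g n) * x powi n)"
    by (simp add: sum.distrib distrib_right)
  also have "\<dots> = lpoly_eval f x + lpoly_eval g x"
    using eval_superset[OF fin, of f x] eval_superset[OF fin, of g x] by auto
  finally show ?thesis .
qed

lemma eval_diff: assumes "is_lpoly f" "is_lpoly g"
  shows "lpoly_eval (f - g) x = lpoly_eval f x - lpoly_eval g x"
proof -
  let ?A = "supp f \<union> supp g"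
  have fin: "finite ?A" using assms by (simp add: is_lpoly_supp)
  have "lpoly_eval (f - g) x = (\<Sum>n\<in>?A. of_int (fls_nth (f-g) n) * x powi n)"
    by (rule eval_superset[OF fin]) (auto simp: supp_def)
  also have "\<dots> = (\<Sum>n\<in>?A. of_int (fls_nth f n) * x powi n) - (\<Sum>n\<in>?A. of_int (fls_nth g n) * x powi n)"
    by (simp add: sum_subtractf left_diff_distrib)
  also have "\<dots> = lpoly_eval f x - lpoly_eval g x"
    using eval_superset[OF fin, of f x] eval_superset[OF fin, of g x] by auto
  finally show ?thesis .
qed

lemma supp_shift: "supp (fls_shift m F) = (\<lambda>n. n - m) ` supp F"
proof (rule set_eqI)
  fix n
  show "n \<in> supp (fls_shift m F) \<longleftrightarrow> n \<in> (\<lambda>n. n - m) ` supp F"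
  proof
    assume "n \<in> supp (fls_shift m F)"
    hence "n + m \<in> supp F" by (simp add: supp_def)
    moreover have "n = (n + m) - m" by simp
    ultimately show "n \<in> (\<lambda>n. n - m) ` supp F" by (rule rev_image_eqI)
  next
    assume "n \<in> (\<lambda>n. n - m) ` supp F"
    then obtain k where "k \<in> supp F" "n = k - m" by blast
    thus "n \<in> supp (fls_shift m F)" by (simp add: supp_def)
  qed
qed

lemma is_lpoly_shift: "is_lpoly F \<Longrightarrow> is_lpoly (fls_shift m F)"
  by (simp add: is_lpoly_supp supp_shift)

lemma eval_shift: assumes "x \<noteq> 0"
  shows "lpoly_eval (fls_shift m F) x = x powi (-m) * lpoly_eval F x"
proof -
  have inj: "inj_on (\<lambda>n. n - m) (supp F)" by (auto simp: inj_on_def)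
  have "lpoly_eval (fls_shift m F) x = (\<Sum>n\<in>supp (fls_shift m F). of_int (fls_nth (fls_shift m F) n) * x powi n)"
    by (simp add: lpoly_eval_def supp_def)
  also have "\<dots> = (\<Sum>n\<in>supp F. of_int (fls_nth F n) * x powi (n - m))"
    unfolding supp_shift by (subst sum.reindex[OF inj]) simp
  also have "\<dots> = (\<Sum>n\<in>supp F. x powi (-m) * (of_int (fls_nth F n) * x powi n))"
    using assms by (intro sum.cong) (auto simp: power_int_diff power_int_minus field_simps)
  also have "\<dots> = x powi (-m) * lpoly_eval F x"
    by (simp add: sum_distrib_left lpoly_eval_def supp_def)
  finally show ?thesis .
qed

lemma supp_poly: "supp (poly_to_lpoly p) \<subseteq> int ` {..degree p}"
proof
  fix n assume "n \<in> supp (poly_to_lpoly p)"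
  hence n: "\<not> n < 0" "coeff p (nat n) \<noteq> 0" by (simp_all add: supp_def poly_to_lpoly_def split: if_splits)
  hence "nat n \<le> degree p" by (intro le_degree)
  moreover have "n = int (nat n)" using n by simp
  ultimately show "n \<in> int ` {..degree p}" by blast
qed

lemma is_lpoly_poly: "is_lpoly (poly_to_lpoly p)"
  unfolding is_lpoly_supp by (rule finite_subset[OF supp_poly]) auto

lemma eval_poly: "lpoly_eval (poly_to_lpoly p) x = poly (map_poly of_int p) x"
proof -
  have "lpoly_eval (poly_to_lpoly p) x = (\<Sum>n\<in>int ` {..degree p}. of_int (fls_nth (poly_to_lpoly p) n) * x powi n)"
    by (rule eval_superset[OF _ supp_poly]) auto
  also have "\<dots> = (\<Sum>k\<le>degree p. of_int (coeff p k) * x ^ k)"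
    by (subst sum.reindex) (auto simp: poly_to_lpoly_def)
  also have "\<dots> = (\<Sum>k\<le>degree p. coeff (map_poly of_int p) k * x ^ k)"
    by (simp add: coeff_map_poly)
  also have "\<dots> = poly (map_poly of_int p) x"
    by (simp add: poly_altdef degree_map_poly)
  finally show ?thesis .
qed


lemma rep:
  assumes "is_lpoly h"
  shows "\<exists>N::nat. \<exists>p. h = fls_shift (int N) (poly_to_lpoly p)"
proof -
  have fin: "finite (supp h)" using assms by (simp add: is_lpoly_supp)
  define K where "K = nat (Max (abs ` supp h \<union> {0}))"
  have bnd: "\<bar>n\<bar> \<le> int K" if "n \<in> supp h" for n
  proof -
    have "\<bar>n\<bar> \<le> Max (abs ` supp h \<union> {0})" using fin that by (intro Max_ge) auto
    thus ?thesis unfolding K_def by linarith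
  qed
  define p where "p = truncate_fps (2*K+1) (Abs_fps (\<lambda>k. fls_nth h (int k - int K)))"
  have "h = fls_shift (int K) (poly_to_lpoly p)"
  proof (rule fls_eqI)
    fix n
    show "fls_nth h n = fls_nth (fls_shift (int K) (poly_to_lpoly p)) n"
    proof (cases "n \<in> supp h")
      case True
      with bnd[OF True] show ?thesis
        by (simp add: poly_to_lpoly_def p_def coeff_truncate_fps)
    next
      case False
      hence h0: "fls_nth h n = 0" by (simp add: supp_def)
      show ?thesis
      proof (cases "n + int K < 0")
        case True thus ?thesis using h0 by (simp add: poly_to_lpoly_def)
      next
        case c: False
        hence "int (nat (n + int K)) - int K = n" by simp
        thus ?thesis using h0 c by (simp add: poly_to_lpoly_def p_def coeff_truncate_fps)
      qed
    qed
  qed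
  thus ?thesis by blast
qed

lemma poly_to_lpoly_mult: "poly_to_lpoly (p * q) = poly_to_lpoly p * poly_to_lpoly q"
  by (simp add: poly_to_lpoly_def fps_of_poly_mult fls_times_fps_to_fls)

lemma map_poly_of_int_mult:
  "map_poly (of_int :: int \<Rightarrow> 'a::comm_ring_1) (p * q) = map_poly of_int p * map_poly of_int q"
  by (rule poly_eqI) (simp add: coeff_mult coeff_map_poly)

lemma eval_mult:
  assumes "is_lpoly f" "is_lpoly g" "x \<noteq> 0"
  shows "is_lpoly (f * g) \<and> lpoly_eval (f * g) x = lpoly_eval f x * lpoly_eval g x"
proof -
  obtain N p where f: "f = fls_shift (int N) (poly_to_lpoly p)" using rep[OF assms(1)] by blast
  obtain K q where g: "g = fls_shift (int K) (poly_to_lpoly q)" using rep[OF assms(2)] by blast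
  have fg: "f * g = fls_shift (int N + int K) (poly_to_lpoly (p * q))"
    by (simp add: f g fls_times_both_shifted_simp poly_to_lpoly_mult)
  have "is_lpoly (f*g)" unfolding fg by (simp add: is_lpoly_shift is_lpoly_poly)
  moreover have "lpoly_eval (f * g) x = x powi (-(int N + int K)) * poly (map_poly of_int (p*q)) x"
    unfolding fg using assms(3) by (simp add: eval_shift eval_poly)
  moreover have "lpoly_eval f x = x powi (- int N) * poly (map_poly of_int p) x"
    unfolding f using assms(3) by (simp add: eval_shift eval_poly)
  moreover have "lpoly_eval g x = x powi (- int K) * poly (map_poly of_int q) x"
    unfolding g using assms(3) by (simp add: eval_shift eval_poly)
  moreover have "x powi (-(int N + int K)) = x powi (- int N) * x powi (- int K)"
    using assms(3) by (simp add: power_int_add[symmetric])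
  ultimately show ?thesis by (simp add: map_poly_of_int_mult)
qed

lemma eval_X: "lpoly_eval (fls_X ^ a) x = x ^ a"
proof -
  have "lpoly_eval (fls_X ^ a) x = (\<Sum>n\<in>{int a}. of_int (fls_nth (fls_X ^ a) n) * x powi n)"
    by (rule eval_superset) (auto simp: supp_def)
  thus ?thesis by simp
qed

lemma is_lpoly_X: "is_lpoly (fls_X ^ a)"
  unfolding is_lpoly_supp by (rule finite_subset[of _ "{int a}"]) (auto simp: supp_def)

lemma eval_dX: assumes "x \<noteq> 0" shows "x * lpoly_eval (fls_deriv (fls_X ^ a)) x = of_nat a * x ^ a"
proof -
  have "lpoly_eval (fls_deriv (fls_X ^ a)) x = (\<Sum>n\<in>{int a - 1}. of_int (fls_nth (fls_deriv (fls_X ^ a)) n) * x powi n)"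
    by (rule eval_superset) (auto simp: supp_def)
  hence "x * lpoly_eval (fls_deriv (fls_X ^ a)) x = of_nat a * (x * x powi (int a - 1))" by simp
  also have "x * x powi (int a - 1) = x powi (1 + (int a - 1))"
    by (subst power_int_add) (use assms in auto)
  also have "\<dots> = x ^ a" by (metis add.commute diff_add_cancel power_int_of_nat)
  finally show ?thesis .
qed

lemma is_lpoly_deriv: "is_lpoly f \<Longrightarrow> is_lpoly (fls_deriv f)"
  unfolding is_lpoly_supp
proof (rule finite_subset[of _ "(\<lambda>n. n - 1) ` supp f"])
  show "supp (fls_deriv f) \<subseteq> (\<lambda>n. n - 1) ` supp f"
  proof
    fix n assume "n \<in> supp (fls_deriv f)"
    hence "n + 1 \<in> supp f" by (simp add: supp_def)
    moreover have "n = (n + 1) - 1" by simp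
    ultimately show "n \<in> (\<lambda>n. n - 1) ` supp f" by (rule rev_image_eqI)
  qed
qed simp


theorem lemma15:
  fixes \<phi> :: "int poly" and x :: complex and f :: "int fls" and a b :: nat
  assumes "degree \<phi> \<ge> 1"
    and "x \<noteq> 0"
    and "poly (map_poly of_int \<phi>) x = 0"
    and "is_lpoly f"
    and "a \<noteq> b"
    and "lpoly_dvd ((poly_to_lpoly \<phi>)\<^sup>2) (fls_X ^ a - fls_X ^ b * f)"
  shows "of_int (int a - int b) = x * lpoly_eval (fls_deriv f) x / lpoly_eval f x"
proof -
  define P where "P = poly_to_lpoly \<phi>"
  define h where "h = fls_X ^ a - fls_X ^ b * f"
  obtain q where q: "is_lpoly q" and hq: "h = P * (P * q)"
    using assms(6) unfolding lpoly_dvd_def P_def h_def by (auto simp: power2_eq_square mult.assoc)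
  have x0: "x \<noteq> 0" by fact
  have iP: "is_lpoly P" by (simp add: P_def is_lpoly_poly)
  have EP: "lpoly_eval P x = 0" using assms(3) by (simp add: P_def eval_poly)
  have iPq: "is_lpoly (P * q)" using eval_mult[OF iP q x0] by blast
  have iXf: "is_lpoly (fls_X ^ b * f)" using eval_mult[OF is_lpoly_X assms(4) x0] by blast
  have iF': "is_lpoly (fls_deriv f)" using is_lpoly_deriv[OF assms(4)] .
  have Eh0: "lpoly_eval h x = 0"
    unfolding hq using eval_mult[OF iP iPq x0] EP by simp
  have Eh: "lpoly_eval h x = x ^ a - x ^ b * lpoly_eval f x"
    unfolding h_def using eval_diff[OF is_lpoly_X iXf] eval_mult[OF is_lpoly_X assms(4) x0]
    by (simp add: eval_X)
  have Ef: "x ^ b * lpoly_eval f x = x ^ a" using Eh Eh0 by simp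
  have Ef0: "lpoly_eval f x \<noteq> 0" using Ef x0 by auto
  have dh0: "lpoly_eval (fls_deriv h) x = 0"
  proof -
    have d: "fls_deriv h = P * fls_deriv (P * q) + fls_deriv P * (P * q)" unfolding hq by simp
    have m1: "is_lpoly (P * fls_deriv (P * q)) \<and> lpoly_eval (P * fls_deriv (P * q)) x = lpoly_eval P x * lpoly_eval (fls_deriv (P * q)) x"
      by (rule eval_mult[OF iP is_lpoly_deriv[OF iPq] x0])
    have m2: "is_lpoly (fls_deriv P * (P * q)) \<and> lpoly_eval (fls_deriv P * (P * q)) x = lpoly_eval (fls_deriv P) x * lpoly_eval (P * q) x"
      by (rule eval_mult[OF is_lpoly_deriv[OF iP] iPq x0])
    have m3: "lpoly_eval (P * q) x = lpoly_eval P x * lpoly_eval q x"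
      using eval_mult[OF iP q x0] by blast
    have "lpoly_eval (fls_deriv h) x = lpoly_eval (P * fls_deriv (P * q)) x + lpoly_eval (fls_deriv P * (P * q)) x"
      unfolding d using m1 m2 eval_add by blast
    also have "\<dots> = 0" using m1 m2 m3 EP by simp
    finally show ?thesis .
  qed
  have dXf: "fls_deriv (fls_X ^ b * f) = fls_X ^ b * fls_deriv f + fls_deriv (fls_X ^ b) * f"
    by simp
  have i1: "is_lpoly (fls_X ^ b * fls_deriv f)" using eval_mult[OF is_lpoly_X iF' x0] by blast
  have i2: "is_lpoly (fls_deriv (fls_X ^ b) * f)"
    using eval_mult[OF is_lpoly_deriv[OF is_lpoly_X] assms(4) x0] by blast
  have "lpoly_eval (fls_deriv h) x = lpoly_eval (fls_deriv (fls_X ^ a)) x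
      - (x ^ b * lpoly_eval (fls_deriv f) x + lpoly_eval (fls_deriv (fls_X ^ b)) x * lpoly_eval f x)"
    unfolding h_def fls_deriv_sub dXf
    using eval_diff[OF is_lpoly_deriv[OF is_lpoly_X] is_lpoly_add[OF i1 i2]] eval_add[OF i1 i2]
      eval_mult[OF is_lpoly_X iF' x0] eval_mult[OF is_lpoly_deriv[OF is_lpoly_X] assms(4) x0]
    by (simp add: eval_X)
  hence "x * (lpoly_eval (fls_deriv (fls_X ^ a)) x
      - (x ^ b * lpoly_eval (fls_deriv f) x + lpoly_eval (fls_deriv (fls_X ^ b)) x * lpoly_eval f x)) = 0"
    using dh0 by simp
  hence "x * lpoly_eval (fls_deriv (fls_X ^ a)) x
      - (x ^ b * (x * lpoly_eval (fls_deriv f) x) + (x * lpoly_eval (fls_deriv (fls_X ^ b)) x) * lpoly_eval f x) = 0"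
    by (simp only: right_diff_distrib distrib_left mult.assoc mult.left_commute[of x])
  hence "of_nat a * x ^ a - (x ^ b * (x * lpoly_eval (fls_deriv f) x) + of_nat b * (x ^ b * lpoly_eval f x)) = 0"
    unfolding eval_dX[OF x0] by (simp add: algebra_simps)
  hence "of_nat a * (x ^ b * lpoly_eval f x) - (x ^ b * (x * lpoly_eval (fls_deriv f) x) + of_nat b * (x ^ b * lpoly_eval f x)) = 0"
    unfolding Ef .
  hence "x ^ b * ((of_nat a - of_nat b) * lpoly_eval f x - x * lpoly_eval (fls_deriv f) x) = 0"
    by (simp add: algebra_simps)
  hence "(of_nat a - of_nat b) * lpoly_eval f x = x * lpoly_eval (fls_deriv f) x"
    using x0 by simp
  thus ?thesis using Ef0 by (simp add: field_simps)
qed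

end
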